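(* Let $1\le k\le s<r$, $G=\mathrm{Sp}(2r)$, $M=C_G(\tau)\cong\mathrm{Sp}(2s)\times\mathrm{Sp}(2(r-s))$, $P\supseteq B$ the maximal parabolic of $G$ with $G/P\cong\mathrm{IG}(k,2r)$, and $Q=M\cap P$ (so $M/Q\cong\mathrm{IG}(k,2s)$). Then the inclusion $W_M\subseteq W$ induces an inclusion $W_M^Q\subseteq W^P$.
   Context: $V=\mathbb{C}^{2r}$ with ordered basis $e_1,\ldots,e_r,e_r',\ldots,e_1'$ and symplectic form with $(e_i,e_j')=\delta_{ij}$, $(e_i,e_j)=(e_i',e_j')=0$; $G=\mathrm{Sp}(V)$, $T$ the diagonal torus $\mathrm{diag}(a_1,\ldots,a_r,a_r^{-1},\ldots,a_1^{-1})$, $\epsilon_i$ the character giving $a_i$; $B$ the Borel with positive roots $\epsilon_i-\epsilon_j$ ($i<j$), $\epsilon_i+\epsilon_j$ ($i\le j$), simple roots $\alpha_i=\epsilon_i-\epsilon_{i+1}$ ($i<r$), $\alpha_r=2\epsilon_r$. $P$ is the maximal parabolic associated to omitting $\alpha_k$. $\tau=\mathrm{diag}(-1,\ldots,-1,1,\ldots,1,-1,\ldots,-1)\in T$ with $2(r-s)$ entries equal to $1$, $M=C_G(\tau)$, whose roots are the roots $\alpha$ of $G$ with $\alpha(\tau)=1$; its simple roots are $\alpha_1,\ldots,\alpha_{s-1},2\alpha_s+\cdots+2\alpha_{r-1}+\alpha_r$ (first factor) and $\alpha_{s+1},\ldots,\alpha_r$ (second factor). $W^P$ (resp. $W_M^Q$)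 denotes the set of minimal length representatives of $W/W_P$ (resp. $W_M/W_Q$), length in $W_M$ measured with respect to the simple reflections of $M$. *)

theory Defs
  imports Main
begin

text \<open>Weyl group of Sp(2r) acting on the index set {+-1,...,+-r} (index -i stands for -eps_i).
  An element w acts by w(eps_i) = eps_(w i), with eps_(-i) = -eps_i.\<close>

definition refl_short :: "int \<Rightarrow> int \<Rightarrow> int \<Rightarrow> int" where
  "refl_short a b = (\<lambda>x. if x = a then b else if x = b then a
                        else if x = -a then -b else if x = -b then -a else x)"

definition refl_long :: "int \<Rightarrow> int \<Rightarrow> int" where
  "refl_long a = (\<lambda>x. if x = a then -a else if x = -a then a else x)"

text \<open>Simple reflection s_i of G = Sp(2r), i = 1..r: alpha_i = eps_i - eps_(i+1) (i<r), alpha_r = 2 eps_r.\<close>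
definition sref :: "nat \<Rightarrow> nat \<Rightarrow> int \<Rightarrow> int" where
  "sref r i = (if i < r then refl_short (int i) (int i + 1) else refl_long (int r))"

definition word_prod :: "('a \<Rightarrow> 'a) list \<Rightarrow> 'a \<Rightarrow> 'a" where
  "word_prod ws = foldr (\<circ>) ws id"

definition gen_group :: "('a \<Rightarrow> 'a) set \<Rightarrow> ('a \<Rightarrow> 'a) set" where
  "gen_group S = {word_prod ws | ws. set ws \<subseteq> S}"

definition word_length :: "('a \<Rightarrow> 'a) set \<Rightarrow> ('a \<Rightarrow> 'a) \<Rightarrow> nat" where
  "word_length S w = (LEAST n. \<exists>ws. set ws \<subseteq> S \<and> length ws = n \<and> word_prod ws = w)"

definition min_reps :: "(('a \<Rightarrow> 'a) \<Rightarrow> nat) \<Rightarrow> ('a \<Rightarrow> 'a) set \<Rightarrow> ('a \<Rightarrow> 'a) set \<Rightarrow> ('a \<Rightarrow> 'a) set" where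
  "min_reps len W K = {w \<in> W. \<forall>u \<in> K. len w \<le> len (w \<circ> u)}"

definition simple_G :: "nat \<Rightarrow> (int \<Rightarrow> int) set" where
  "simple_G r = sref r ` {1..r}"

definition simple_P :: "nat \<Rightarrow> nat \<Rightarrow> (int \<Rightarrow> int) set" where
  "simple_P r k = sref r ` ({1..r} - {k})"

text \<open>Simple roots of M: alpha_1..alpha_(s-1), 2 eps_s (= 2alpha_s+...+2alpha_(r-1)+alpha_r),
  and alpha_(s+1),...,alpha_r.\<close>
definition simple_M :: "nat \<Rightarrow> nat \<Rightarrow> (int \<Rightarrow> int) set" where
  "simple_M r s = (\<lambda>i. refl_short (int i) (int i + 1)) ` {1..<s}
                 \<union> {refl_long (int s)}
                 \<union> sref r ` {s+1..r}"

definition W_G :: "nat \<Rightarrow> (int \<Rightarrow> int) set" where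
  "W_G r = gen_group (simple_G r)"

definition W_P :: "nat \<Rightarrow> nat \<Rightarrow> (int \<Rightarrow> int) set" where
  "W_P r k = gen_group (simple_P r k)"

definition W_M :: "nat \<Rightarrow> nat \<Rightarrow> (int \<Rightarrow> int) set" where
  "W_M r s = gen_group (simple_M r s)"

text \<open>Q = M \<inter> P, so W_Q = W_M \<inter> W_P.\<close>
definition W_Q :: "nat \<Rightarrow> nat \<Rightarrow> nat \<Rightarrow> (int \<Rightarrow> int) set" where
  "W_Q r s k = W_M r s \<inter> W_P r k"

definition WP_reps :: "nat \<Rightarrow> nat \<Rightarrow> (int \<Rightarrow> int) set" where
  "WP_reps r k = min_reps (word_length (simple_G r)) (W_G r) (W_P r k)"

definition WMQ_reps :: "nat \<Rightarrow> nat \<Rightarrow> nat \<Rightarrow> (int \<Rightarrow> int) set" where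
  "WMQ_reps r s k = min_reps (word_length (simple_M r s)) (W_M r s) (W_Q r s k)"

end

theory Submission
  imports Defs
begin


definition Dm :: "nat \<Rightarrow> int set" where "Dm r = {x. x \<noteq> 0 \<and> \<bar>x\<bar> \<le> int r}"
definition pos :: "int \<Rightarrow> int \<Rightarrow> bool" where
  "pos x y \<longleftrightarrow> (0<x \<and> (y<0 \<or> x<y)) \<or> (x<0 \<and> y<0 \<and> x<y)"
definition sbk :: "nat \<Rightarrow> int \<Rightarrow> int \<Rightarrow> bool" where
  "sbk s x y \<longleftrightarrow> ((\<bar>x\<bar> \<le> int s) = (\<bar>y\<bar> \<le> int s))"
definition Fset :: "nat \<Rightarrow> nat \<Rightarrow> (int \<Rightarrow> int) \<Rightarrow> (int \<times> int) set" where
  "Fset r s w = {(x,y). x \<in> Dm r \<and> y \<in> Dm r \<and> sbk s x y \<and> pos x y \<and> pos (w y) (w x)}"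
definition Lset :: "nat \<Rightarrow> (int \<Rightarrow> int) \<Rightarrow> int set" where
  "Lset r w = {x. x \<in> Dm r \<and> 0 < x \<and> w x < 0}"
definition inv2 :: "nat \<Rightarrow> nat \<Rightarrow> (int \<Rightarrow> int) \<Rightarrow> nat" where
  "inv2 r s w = card (Fset r s w) + card (Lset r w)"
definition good :: "nat \<Rightarrow> nat \<Rightarrow> (int \<Rightarrow> int) \<Rightarrow> bool" where
  "good r s w \<longleftrightarrow> (\<forall>x. w (-x) = - w x) \<and> bij_betw w (Dm r) (Dm r)
     \<and> (\<forall>x. x \<notin> Dm r \<longrightarrow> w x = x) \<and> (\<forall>x\<in>Dm r. sbk s (w x) x)"

lemma finite_Dm: "finite (Dm r)"
proof -
  have "Dm r \<subseteq> {- int r..int r}" by (auto simp: Dm_def)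
  thus ?thesis by (rule finite_subset) simp
qed

lemma finite_Fset: "finite (Fset r s w)"
proof -
  have "Fset r s w \<subseteq> Dm r \<times> Dm r" by (auto simp: Fset_def)
  thus ?thesis using finite_Dm by (metis finite_SigmaI finite_subset)
qed

lemma finite_Lset: "finite (Lset r w)"
  using finite_Dm by (rule finite_subset[rotated]) (auto simp: Lset_def)

lemma pos_trans: "pos x y \<Longrightarrow> pos y z \<Longrightarrow> pos x z" by (auto simp: pos_def)
lemma pos_asym: "pos x y \<Longrightarrow> \<not> pos y x" by (auto simp: pos_def)
lemma pos_irrefl: "\<not> pos x x" by (auto simp: pos_def)
lemma pos_total: "x \<noteq> 0 \<Longrightarrow> y \<noteq> 0 \<Longrightarrow> x \<noteq> y \<Longrightarrow> pos x y \<or> pos y x" by (auto simp: pos_def)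
lemma pos_neg: "pos (-x) (-y) = pos y x" by (auto simp: pos_def)
lemma pos_negself: "pos x (-x) \<longleftrightarrow> 0 < x" by (auto simp: pos_def)

lemma word_prod_comp: "foldr (\<circ>) ws g = word_prod ws \<circ> g"
  by (induction ws) (auto simp: word_prod_def)

lemma word_prod_append: "word_prod (xs @ ys) = word_prod xs \<circ> word_prod ys"
proof -
  have "word_prod (xs @ ys) = foldr (\<circ>) xs (word_prod ys)" by (simp add: word_prod_def)
  thus ?thesis by (simp add: word_prod_comp)
qed

lemma word_prod_snoc: "word_prod (xs @ [t]) = word_prod xs \<circ> t"
  unfolding word_prod_append by (simp add: word_prod_def)

lemma gen_group_comp: "u \<in> gen_group S \<Longrightarrow> v \<in> gen_group S \<Longrightarrow> u \<circ> v \<in> gen_group S"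
  unfolding gen_group_def
proof (clarsimp)
  fix ws ws' assume "set ws \<subseteq> S" "set ws' \<subseteq> S"
  thus "\<exists>xs. word_prod ws \<circ> word_prod ws' = word_prod xs \<and> set xs \<subseteq> S"
    by (intro exI[of _ "ws @ ws'"]) (simp add: word_prod_append)
qed

lemma gen_group_gen: "t \<in> S \<Longrightarrow> t \<in> gen_group S"
  unfolding gen_group_def by (rule CollectI, rule exI[of _ "[t]"]) (simp add: word_prod_def)

lemma good_comp: "good r s f \<Longrightarrow> good r s g \<Longrightarrow> good r s (f \<circ> g)"
  unfolding good_def
proof (intro conjI allI ballI impI)
  assume f: "(\<forall>x. f (- x) = - f x) \<and> bij_betw f (Dm r) (Dm r) \<and> (\<forall>x. x \<notin> Dm r \<longrightarrow> f x = x) \<and> (\<forall>x\<in>Dm r. sbk s (f x) x)"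
     and g: "(\<forall>x. g (- x) = - g x) \<and> bij_betw g (Dm r) (Dm r) \<and> (\<forall>x. x \<notin> Dm r \<longrightarrow> g x = x) \<and> (\<forall>x\<in>Dm r. sbk s (g x) x)"
  show "\<And>x. (f \<circ> g) (- x) = - (f \<circ> g) x" using f g by simp
  show "bij_betw (f \<circ> g) (Dm r) (Dm r)" using f g by (meson bij_betw_trans)
  show "\<And>x. x \<notin> Dm r \<Longrightarrow> (f \<circ> g) x = x" using f g by simp
  fix x assume x: "x \<in> Dm r"
  have "g x \<in> Dm r" using g x bij_betw_apply by metis
  thus "sbk s ((f \<circ> g) x) x" using f g x unfolding sbk_def by auto
qed

lemma good_id: "good r s id"
  by (auto simp: good_def sbk_def)


lemma card_split: "finite X \<Longrightarrow> card X = card (X - A) + card (X \<inter> A)"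
  by (metis Diff_Diff_Int card_Diff_subset_Int Diff_subset Int_lower1 card_mono le_add_diff_inverse2 finite_Int
      card_Diff_subset finite_Diff)

lemma invol_bij: "(\<And>x. x \<in> A \<Longrightarrow> f x \<in> A) \<Longrightarrow> (\<And>x. f (f x) = x) \<Longrightarrow> bij_betw f A A"
  by (rule bij_betw_byWitness[of A f f]) auto

lemma good_short:
  assumes "1 \<le> a" "a + 1 \<le> int r" "sbk s a (a+1)"
  shows "good r s (refl_short a (a+1))"
  unfolding good_def
proof (intro conjI allI ballI impI)
  let ?t = "refl_short a (a+1)"
  show "?t (-x) = - ?t x" for x using assms(1) by (auto simp: refl_short_def)
  show "bij_betw ?t (Dm r) (Dm r)"
    by (rule invol_bij) (use assms in \<open>auto simp: refl_short_def Dm_def\<close>)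
  show "x \<notin> Dm r \<Longrightarrow> ?t x = x" for x using assms by (auto simp: refl_short_def Dm_def)
  show "sbk s (?t x) x" for x using assms by (auto simp: refl_short_def sbk_def)
qed

lemma good_long:
  assumes "1 \<le> a" "a \<le> int r"
  shows "good r s (refl_long a)"
  unfolding good_def
proof (intro conjI allI ballI impI)
  let ?t = "refl_long a"
  show "?t (-x) = - ?t x" for x using assms(1) by (auto simp: refl_long_def)
  show "bij_betw ?t (Dm r) (Dm r)"
    by (rule invol_bij) (use assms in \<open>auto simp: refl_long_def Dm_def\<close>)
  show "x \<notin> Dm r \<Longrightarrow> ?t x = x" for x using assms by (auto simp: refl_long_def Dm_def)
  show "sbk s (?t x) x" for x using assms by (auto simp: refl_long_def sbk_def)
qed

lemma good_odd: "good r s w \<Longrightarrow> w (-x) = - w x" by (simp add: good_def)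
lemma good_D: "good r s w \<Longrightarrow> x \<in> Dm r \<Longrightarrow> w x \<in> Dm r" by (meson good_def bij_betw_apply)
lemma good_inj: "good r s w \<Longrightarrow> x \<in> Dm r \<Longrightarrow> y \<in> Dm r \<Longrightarrow> w x = w y \<Longrightarrow> x = y"
  by (meson good_def bij_betw_def inj_on_def)
lemma good_sb: "good r s w \<Longrightarrow> x \<in> Dm r \<Longrightarrow> sbk s (w x) x" by (simp add: good_def)
lemma good_out: "good r s w \<Longrightarrow> x \<notin> Dm r \<Longrightarrow> w x = x" by (simp add: good_def)

lemma rs_vals: assumes "1 \<le> a" shows "refl_short a (a+1) a = a+1" "refl_short a (a+1) (a+1) = a"
  "refl_short a (a+1) (-a) = -(a+1)" "refl_short a (a+1) (-(a+1)) = -a"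
  "x \<noteq> a \<Longrightarrow> x \<noteq> a+1 \<Longrightarrow> x \<noteq> -a \<Longrightarrow> x \<noteq> -(a+1) \<Longrightarrow> refl_short a (a+1) x = x"
  using assms by (auto simp: refl_short_def)
lemma rl_vals: assumes "1 \<le> a" shows "refl_long a a = -a" "refl_long a (-a) = a"
  "x \<noteq> a \<Longrightarrow> x \<noteq> -a \<Longrightarrow> refl_long a x = x"
  using assms by (auto simp: refl_long_def)
lemma cases5: "x = a \<or> x = a+1 \<or> x = -a \<or> x = -(a+1) \<or> (x \<noteq> a \<and> x \<noteq> a+1 \<and> x \<noteq> -a \<and> x \<noteq> -(a+1))" by blast
lemma cases3: "x = a \<or> x = -a \<or> (x \<noteq> a \<and> x \<noteq> -a)" by blast

lemma pos_short:
  assumes "1 \<le> a" "x \<noteq> 0" "y \<noteq> 0"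
    "(x,y) \<notin> {(a,a+1),(a+1,a),(-a,-(a+1)),(-(a+1),-a)}"
  shows "pos (refl_short a (a+1) x) (refl_short a (a+1) y) = pos x y"
  using cases5[of x a] cases5[of y a] assms
  by (elim disjE; simp only: rs_vals[OF assms(1)]; simp only: pos_def; auto)

lemma pos_long:
  assumes "1 \<le> a" "x \<noteq> 0" "y \<noteq> 0" "\<bar>x\<bar> \<le> a" "\<bar>y\<bar> \<le> a"
    "(x,y) \<notin> {(a,-a),(-a,a)}"
  shows "pos (refl_long a x) (refl_long a y) = pos x y"
  using cases3[of x a] cases3[of y a] assms
  by (elim disjE; simp only: rl_vals[OF assms(1)]; simp only: pos_def; auto)


lemma step_short:
  assumes w: "good r s w" and a: "1 \<le> a" "a + 1 \<le> int r" "sbk s a (a+1)"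
  shows "pos (w a) (w (a+1)) \<Longrightarrow> inv2 r s (w \<circ> refl_short a (a+1)) = inv2 r s w + 2"
    and "\<not> pos (w a) (w (a+1)) \<Longrightarrow> inv2 r s (w \<circ> refl_short a (a+1)) + 2 = inv2 r s w"
proof -
  define t where "t = refl_short a (a+1)"
  have tt: "t (t x) = x" for x using a unfolding t_def refl_short_def by auto
  have tD: "t x \<in> Dm r \<longleftrightarrow> x \<in> Dm r" for x using a unfolding t_def refl_short_def Dm_def by auto
  have tsb: "sbk s (t x) (t y) = sbk s x y" for x y using a unfolding t_def refl_short_def sbk_def by auto
  have tpos: "0 < t x \<longleftrightarrow> 0 < x" for x using a unfolding t_def refl_short_def by auto
  have injt: "inj t" by (metis injI tt)
  define Gs where "Gs = {(x,y). x \<in> Dm r \<and> y \<in> Dm r \<and> sbk s x y \<and> pos (t x) (t y) \<and> pos (w y) (w x)}"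
  have FG: "Fset r s (w \<circ> t) = map_prod t t ` Gs"
  proof
    show "Fset r s (w \<circ> t) \<subseteq> map_prod t t ` Gs"
    proof
      fix p assume "p \<in> Fset r s (w \<circ> t)"
      then obtain x y where p: "p = (x,y)" "x \<in> Dm r" "y \<in> Dm r" "sbk s x y" "pos x y" "pos (w (t y)) (w (t x))"
        unfolding Fset_def by auto
      have "(t x, t y) \<in> Gs" using p tt tD tsb unfolding Gs_def by auto
      moreover have "p = map_prod t t (t x, t y)" using p tt by simp
      ultimately show "p \<in> map_prod t t ` Gs" by blast
    qed
    show "map_prod t t ` Gs \<subseteq> Fset r s (w \<circ> t)"
      using tt tD tsb unfolding Gs_def Fset_def by auto
  qed
  have finG: "finite Gs"
  proof -
    have "Gs \<subseteq> Dm r \<times> Dm r" by (auto simp: Gs_def)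
    thus ?thesis using finite_Dm by (meson finite_SigmaI finite_subset)
  qed
  have cF: "card (Fset r s (w \<circ> t)) = card Gs"
    unfolding FG by (rule card_image) (use injt in \<open>auto simp: inj_on_def inj_def\<close>)
  define A where "A = {(a,a+1),(a+1,a),(-a,-(a+1)),(-(a+1),-a)}"
  have GA: "Gs - A = Fset r s w - A"
    using pos_short[OF a(1)] unfolding Gs_def Fset_def A_def t_def Dm_def by auto
  have aD: "a \<in> Dm r" "a+1 \<in> Dm r" "-a \<in> Dm r" "-(a+1) \<in> Dm r" using a by (auto simp: Dm_def)
  have wa: "w (-a) = - w a" "w (-(a+1)) = - w (a+1)" using good_odd[OF w, of a] good_odd[OF w, of "a+1"] by simp_all
  have wne: "w a \<noteq> w (a+1)" using good_inj[OF w aD(1) aD(2)] by auto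
  have wnz: "w a \<noteq> 0" "w (a+1) \<noteq> 0" using good_D[OF w aD(1)] good_D[OF w aD(2)] by (auto simp: Dm_def)
  have sb: "sbk s a (a+1)" "sbk s (a+1) a" "sbk s (-a) (-(a+1))" "sbk s (-(a+1)) (-a)"
    using a(3) by (auto simp: sbk_def)
  have tv: "t a = a+1" "t (a+1) = a" "t (-a) = -(a+1)" "t (-(a+1)) = -a"
    using rs_vals[OF a(1)] by (auto simp: t_def)
  have ps: "pos a (a+1)" "pos (-(a+1)) (-a)" "\<not> pos (a+1) a" "\<not> pos (-a) (-(a+1))" using a(1) by (auto simp: pos_def)
  have pn: "pos (- w (a+1)) (- w a) = pos (w a) (w (a+1))" "pos (- w a) (- w (a+1)) = pos (w (a+1)) (w a)"
    by (auto simp: pos_neg)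
  have GAi: "Gs \<inter> A = (if pos (w a) (w (a+1)) then {(a+1,a),(-a,-(a+1))} else {})"
    unfolding Gs_def A_def using aD sb tv ps pn wa pos_asym[of "w a" "w (a+1)"] by (auto simp: pos_irrefl)
  have FAi: "Fset r s w \<inter> A = (if pos (w a) (w (a+1)) then {} else {(a,a+1),(-(a+1),-a)})"
    unfolding Fset_def A_def using aD sb ps pn wa pos_asym[of "w a" "w (a+1)"] pos_total[OF wnz wne]
    by (auto simp: pos_irrefl)
  have c2: "card {(a+1,a),(-a,-(a+1))} = 2" "card {(a,a+1),(-(a+1),-a)} = 2" using a(1) by auto
  have LL: "Lset r (w \<circ> t) = t ` Lset r w"
  proof
    show "Lset r (w \<circ> t) \<subseteq> t ` Lset r w"
    proof
      fix x assume "x \<in> Lset r (w \<circ> t)"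
      hence "t x \<in> Lset r w" using tD tpos unfolding Lset_def by auto
      thus "x \<in> t ` Lset r w" using tt by (metis image_eqI)
    qed
    show "t ` Lset r w \<subseteq> Lset r (w \<circ> t)" using tD tpos tt unfolding Lset_def by auto
  qed
  have cL: "card (Lset r (w \<circ> t)) = card (Lset r w)"
    unfolding LL by (rule card_image) (meson injt inj_on_subset subset_UNIV)
  have e1: "card Gs = card (Gs - A) + card (Gs \<inter> A)" by (rule card_split[OF finG])
  have e2: "card (Fset r s w) = card (Fset r s w - A) + card (Fset r s w \<inter> A)" by (rule card_split[OF finite_Fset])
  show "pos (w a) (w (a+1)) \<Longrightarrow> inv2 r s (w \<circ> refl_short a (a+1)) = inv2 r s w + 2"
    using e1 e2 GA GAi FAi c2 cL cF unfolding inv2_def t_def by simp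
  show "\<not> pos (w a) (w (a+1)) \<Longrightarrow> inv2 r s (w \<circ> refl_short a (a+1)) + 2 = inv2 r s w"
    using e1 e2 GA GAi FAi c2 cL cF unfolding inv2_def t_def by simp
qed

lemma pos_long':
  assumes "1 \<le> a" "x \<noteq> 0" "y \<noteq> 0" "(x,y) \<notin> {(a,-a),(-a,a)}"
    "\<bar>x\<bar> = a \<Longrightarrow> \<bar>y\<bar> \<le> a" "\<bar>y\<bar> = a \<Longrightarrow> \<bar>x\<bar> \<le> a"
  shows "pos (refl_long a x) (refl_long a y) = pos x y"
proof (cases "\<bar>x\<bar> = a \<or> \<bar>y\<bar> = a")
  case True
  hence "\<bar>x\<bar> \<le> a" "\<bar>y\<bar> \<le> a" using assms by auto
  thus ?thesis using pos_long assms by blast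
next
  case False
  hence "x \<noteq> a" "x \<noteq> -a" "y \<noteq> a" "y \<noteq> -a" using assms(1) by auto
  thus ?thesis using rl_vals[OF assms(1)] by simp
qed

lemma step_long:
  assumes w: "good r s w" and a: "1 \<le> a" "a \<le> int r"
    and be: "\<forall>y\<in>Dm r. sbk s a y \<longrightarrow> \<bar>y\<bar> \<le> a"
  shows "0 < w a \<Longrightarrow> inv2 r s (w \<circ> refl_long a) = inv2 r s w + 2"
    and "\<not> 0 < w a \<Longrightarrow> inv2 r s (w \<circ> refl_long a) + 2 = inv2 r s w"
proof -
  define t where "t = refl_long a"
  have tt: "t (t x) = x" for x using a unfolding t_def refl_long_def by auto
  have tD: "t x \<in> Dm r \<longleftrightarrow> x \<in> Dm r" for x using a unfolding t_def refl_long_def Dm_def by auto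
  have tsb: "sbk s (t x) (t y) = sbk s x y" for x y using a unfolding t_def refl_long_def sbk_def by auto
  have injt: "inj t" by (metis injI tt)
  define Gs where "Gs = {(x,y). x \<in> Dm r \<and> y \<in> Dm r \<and> sbk s x y \<and> pos (t x) (t y) \<and> pos (w y) (w x)}"
  have FG: "Fset r s (w \<circ> t) = map_prod t t ` Gs"
  proof
    show "Fset r s (w \<circ> t) \<subseteq> map_prod t t ` Gs"
    proof
      fix p assume "p \<in> Fset r s (w \<circ> t)"
      then obtain x y where p: "p = (x,y)" "x \<in> Dm r" "y \<in> Dm r" "sbk s x y" "pos x y" "pos (w (t y)) (w (t x))"
        unfolding Fset_def by auto
      have "(t x, t y) \<in> Gs" using p tt tD tsb unfolding Gs_def by auto
      moreover have "p = map_prod t t (t x, t y)" using p tt by simp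
      ultimately show "p \<in> map_prod t t ` Gs" by blast
    qed
    show "map_prod t t ` Gs \<subseteq> Fset r s (w \<circ> t)"
      using tt tD tsb unfolding Gs_def Fset_def by auto
  qed
  have finG: "finite Gs"
  proof -
    have "Gs \<subseteq> Dm r \<times> Dm r" by (auto simp: Gs_def)
    thus ?thesis using finite_Dm by (meson finite_SigmaI finite_subset)
  qed
  have cF: "card (Fset r s (w \<circ> t)) = card Gs"
    unfolding FG by (rule card_image) (use injt in \<open>auto simp: inj_on_def inj_def\<close>)
  define A where "A = {(a,-a),(-a,a)}"
  have GA: "Gs - A = Fset r s w - A"
  proof -
    have "pos (t x) (t y) = pos x y" if "x \<in> Dm r" "y \<in> Dm r" "sbk s x y" "(x,y) \<notin> A" for x y
    proof -
      have "\<bar>x\<bar> = a \<Longrightarrow> \<bar>y\<bar> \<le> a" using be that(2,3) by (auto simp: sbk_def)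
      moreover have "\<bar>y\<bar> = a \<Longrightarrow> \<bar>x\<bar> \<le> a" using be that(1,3) by (auto simp: sbk_def)
      ultimately show ?thesis unfolding t_def using pos_long'[OF a(1)] that by (auto simp: Dm_def A_def)
    qed
    thus ?thesis unfolding Gs_def Fset_def by auto
  qed
  have aD: "a \<in> Dm r" "-a \<in> Dm r" using a by (auto simp: Dm_def)
  have wa: "w (-a) = - w a" using good_odd[OF w, of a] by simp
  have wnz: "w a \<noteq> 0" using good_D[OF w aD(1)] by (auto simp: Dm_def)
  have sb: "sbk s a (-a)" "sbk s (-a) a" by (auto simp: sbk_def)
  have tv: "t a = -a" "t (-a) = a" using rl_vals[OF a(1)] by (auto simp: t_def)
  have ps: "pos a (-a)" "\<not> pos (-a) a" using a(1) by (auto simp: pos_def)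
  have pn: "pos (w a) (- w a) = (0 < w a)" "pos (- w a) (w a) = (w a < 0)"
    by (auto simp: pos_def)
  have GAi: "Gs \<inter> A = (if 0 < w a then {(-a,a)} else {})"
    unfolding Gs_def A_def using aD sb tv ps pn wa by auto
  have FAi: "Fset r s w \<inter> A = (if 0 < w a then {} else {(a,-a)})"
    unfolding Fset_def A_def using aD sb ps pn wa wnz by auto
  have tfix: "t x = x" if "0 < x" "x \<noteq> a" for x
    using rl_vals(3)[OF a(1), of x] a(1) that unfolding t_def by linarith
  have LL: "Lset r (w \<circ> t) - {a} = Lset r w - {a}"
  proof -
    have "x \<in> Lset r (w \<circ> t) - {a} \<longleftrightarrow> x \<in> Lset r w - {a}" for x
      using tfix[of x] unfolding Lset_def by auto
    thus ?thesis by blast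
  qed
  have La: "a \<in> Lset r (w \<circ> t) \<longleftrightarrow> 0 < w a" "a \<in> Lset r w \<longleftrightarrow> w a < 0"
    using aD tv wa a unfolding Lset_def by auto
  have e1: "card Gs = card (Gs - A) + card (Gs \<inter> A)" by (rule card_split[OF finG])
  have e2: "card (Fset r s w) = card (Fset r s w - A) + card (Fset r s w \<inter> A)" by (rule card_split[OF finite_Fset])
  have e3: "card (Lset r (w \<circ> t)) = card (Lset r (w \<circ> t) - {a}) + card (Lset r (w \<circ> t) \<inter> {a})" by (rule card_split[OF finite_Lset])
  have e4: "card (Lset r w) = card (Lset r w - {a}) + card (Lset r w \<inter> {a})" by (rule card_split[OF finite_Lset])
  have i3: "Lset r (w \<circ> t) \<inter> {a} = (if 0 < w a then {a} else {})" using La by auto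
  have i4: "Lset r w \<inter> {a} = (if 0 < w a then {} else {a})" using La wnz by auto
  have n1: "card (Lset r (w \<circ> t)) = card (Lset r w - {a}) + (if 0 < w a then 1 else 0)"
    using e3 unfolding LL i3 by simp
  have n2: "card (Lset r w) = card (Lset r w - {a}) + (if 0 < w a then 0 else 1)"
    using e4 unfolding i4 by simp
  have n3: "card (Fset r s (w \<circ> t)) = card (Fset r s w - A) + (if 0 < w a then 1 else 0)"
    using e1 unfolding cF GA GAi by simp
  have n4: "card (Fset r s w) = card (Fset r s w - A) + (if 0 < w a then 0 else 1)"
    using e2 unfolding FAi by simp
  have inv: "inv2 r s (w \<circ> refl_long a) = card (Fset r s (w \<circ> t)) + card (Lset r (w \<circ> t))"
    unfolding inv2_def t_def ..
  show "0 < w a \<Longrightarrow> inv2 r s (w \<circ> refl_long a) = inv2 r s w + 2"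
    unfolding inv using n1 n2 n3 n4 unfolding inv2_def by simp
  show "\<not> 0 < w a \<Longrightarrow> inv2 r s (w \<circ> refl_long a) + 2 = inv2 r s w"
    unfolding inv using n1 n2 n3 n4 unfolding inv2_def by simp
qed



definition rok :: "nat \<Rightarrow> nat \<Rightarrow> (int \<Rightarrow> int) \<Rightarrow> bool" where
  "rok r s t \<longleftrightarrow> t = id \<or> (\<exists>a. 1 \<le> a \<and> a+1 \<le> int r \<and> sbk s a (a+1) \<and> t = refl_short a (a+1))
     \<or> (\<exists>a. 1 \<le> a \<and> a \<le> int r \<and> (\<forall>y\<in>Dm r. sbk s a y \<longrightarrow> \<bar>y\<bar> \<le> a) \<and> t = refl_long a)"

lemma rok_good: "rok r s t \<Longrightarrow> good r s t"
  unfolding rok_def using good_id good_short good_long by blast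

lemma rok_inv: assumes "good r s w" "rok r s t" shows "inv2 r s (w \<circ> t) \<le> inv2 r s w + 2"
  using assms(2) unfolding rok_def
proof (elim disjE exE conjE)
  assume "t = id" thus ?thesis by simp
next
  fix a assume h: "1 \<le> a" "a + 1 \<le> int r" "sbk s a (a + 1)" "t = refl_short a (a + 1)"
  show ?thesis using step_short[OF assms(1) h(1-3)] h(4) by (cases "pos (w a) (w (a+1))") auto
next
  fix a assume h: "1 \<le> a" "a \<le> int r" "\<forall>y\<in>Dm r. sbk s a y \<longrightarrow> \<bar>y\<bar> \<le> a" "t = refl_long a"
  show ?thesis using step_long[OF assms(1) h(1-3)] h(4) by (cases "0 < w a") auto
qed

lemma inv2_id: "inv2 r s id = 0"
proof -
  have "Fset r s id = {}" unfolding Fset_def using pos_asym by auto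
  moreover have "Lset r id = {}" unfolding Lset_def by auto
  ultimately show ?thesis unfolding inv2_def by simp
qed

lemma word_lower:
  assumes "\<forall>t\<in>S. rok r s t"
  shows "set ws \<subseteq> S \<Longrightarrow> good r s (word_prod ws) \<and> inv2 r s (word_prod ws) \<le> 2 * length ws"
proof (induction ws rule: rev_induct)
  case Nil thus ?case using good_id inv2_id by (simp add: word_prod_def id_def)
next
  case (snoc t ws)
  hence ih: "good r s (word_prod ws)" "inv2 r s (word_prod ws) \<le> 2 * length ws" and t: "rok r s t"
    using assms by auto
  have l: "length (ws @ [t]) = length ws + 1" by simp
  show ?case unfolding word_prod_snoc l
    using good_comp[OF ih(1) rok_good[OF t]] rok_inv[OF ih(1) t] ih(2) by (intro conjI) (assumption, arith)
qed

lemma chain_pos: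
  assumes "\<forall>i. lo \<le> i \<and> i < hi \<longrightarrow> pos (f i) (f (i+1))"
  shows "lo \<le> i \<Longrightarrow> i < j \<Longrightarrow> j \<le> hi \<Longrightarrow> pos (f i) (f (j::int))"
proof -
  have key: "\<forall>j. lo \<le> i \<longrightarrow> j = i + 1 + int n \<longrightarrow> j \<le> hi \<longrightarrow> pos (f i) (f j)" for n
  proof (induction n)
    case 0 show ?case using assms by auto
  next
    case (Suc n)
    show ?case
    proof (intro allI impI)
      fix j assume h: "lo \<le> i" "j = i + 1 + int (Suc n)" "j \<le> hi"
      have e: "j - 1 = i + 1 + int n" using h by simp
      have "pos (f i) (f (i + 1 + int n))" using Suc.IH h by auto
      hence "pos (f i) (f (j-1))" by (subst e)
      moreover have "pos (f (j-1)) (f j)" using assms h by (metis add.commute diff_add_cancel le_add_same_cancel2 linorder_not_less order_le_less_trans of_nat_0_le_iff zle_add1_eq_le)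
      ultimately show "pos (f i) (f j)" by (rule pos_trans)
    qed
  qed
  assume h: "lo \<le> i" "i < j" "j \<le> hi"
  have "j = i + 1 + int (nat (j - i - 1))" using h(2) by simp
  thus ?thesis using key[of "nat (j - i - 1)"] h by blast
qed

lemma incr_id:
  assumes inc: "\<forall>i j. lo \<le> i \<and> i < j \<and> j \<le> hi \<longrightarrow> f i < f (j::int)"
    and rng: "\<forall>i. lo \<le> i \<and> i \<le> hi \<longrightarrow> lo \<le> f i \<and> f i \<le> hi"
  shows "lo \<le> i \<Longrightarrow> i \<le> hi \<Longrightarrow> f i = i"
proof -
  have up: "lo + int n \<le> hi \<longrightarrow> lo + int n \<le> f (lo + int n)" for n
  proof (induction n)
    case 0 thus ?case using rng by auto
  next
    case (Suc n)
    show ?case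
    proof
      assume h: "lo + int (Suc n) \<le> hi"
      have "f (lo + int n) < f (lo + int (Suc n))" using inc h by auto
      thus "lo + int (Suc n) \<le> f (lo + int (Suc n))" using Suc h by auto
    qed
  qed
  have dn: "lo \<le> hi - int n \<longrightarrow> f (hi - int n) \<le> hi - int n" for n
  proof (induction n)
    case 0 thus ?case using rng by auto
  next
    case (Suc n)
    show ?case
    proof
      assume h: "lo \<le> hi - int (Suc n)"
      have "f (hi - int (Suc n)) < f (hi - int n)" using inc h by auto
      thus "f (hi - int (Suc n)) \<le> hi - int (Suc n)" using Suc h by auto
    qed
  qed
  assume "lo \<le> i" "i \<le> hi"
  moreover have "lo + int (nat (i - lo)) = i" "hi - int (nat (hi - i)) = i" using \<open>lo \<le> i\<close> \<open>i \<le> hi\<close> by auto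
  ultimately show ?thesis using up[of "nat (i - lo)"] dn[of "nat (hi - i)"] by auto
qed

lemma pos_posR: "pos x y \<Longrightarrow> 0 < y \<Longrightarrow> 0 < x \<and> x < y" by (auto simp: pos_def)

lemma block_id:
  assumes ch: "\<forall>i. lo \<le> i \<and> i < hi \<longrightarrow> pos (w i) (w (i+1))" and hp: "0 < w hi"
    and rng: "\<forall>i. lo \<le> i \<and> i \<le> hi \<longrightarrow> 0 < w i \<longrightarrow> lo \<le> w i \<and> w i \<le> hi"
  shows "lo \<le> i \<Longrightarrow> i \<le> hi \<Longrightarrow> w i = i"
proof -
  have p: "0 < w i" if "lo \<le> i" "i \<le> hi" for i
  proof (cases "i = hi")
    case True thus ?thesis using hp by simp
  next
    case False thus ?thesis using chain_pos[OF ch, of i hi] that hp pos_posR by fastforce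
  qed
  have inc: "\<forall>i j. lo \<le> i \<and> i < j \<and> j \<le> hi \<longrightarrow> w i < w j"
    using chain_pos[OF ch] p pos_posR by (meson order.strict_implies_order order_trans)
  show "lo \<le> i \<Longrightarrow> i \<le> hi \<Longrightarrow> w i = i"
    by (rule incr_id[OF inc]) (use rng p in auto)
qed



lemma ident:
  assumes w: "good r s w" and rs: "1 \<le> r" "s < r"
    and ch: "\<forall>a. 1 \<le> a \<and> a+1 \<le> int r \<and> sbk s a (a+1) \<longrightarrow> pos (w a) (w (a+1))"
    and hr: "0 < w (int r)" and hs: "1 \<le> s \<longrightarrow> 0 < w (int s)"
  shows "w = id"
proof -
  have rngD: "w i \<in> Dm r" "sbk s (w i) i" if "i \<in> Dm r" for i using good_D[OF w that] good_sb[OF w that] by auto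
  have b2: "w i = i" if "int s + 1 \<le> i" "i \<le> int r" for i
  proof (rule block_id[of "int s + 1" "int r" w])
    show "\<forall>i. int s + 1 \<le> i \<and> i < int r \<longrightarrow> pos (w i) (w (i + 1))"
      using ch by (auto simp: sbk_def)
    show "0 < w (int r)" by (rule hr)
    show "\<forall>i. int s + 1 \<le> i \<and> i \<le> int r \<longrightarrow> 0 < w i \<longrightarrow> int s + 1 \<le> w i \<and> w i \<le> int r"
    proof (intro allI impI)
      fix i assume h: "int s + 1 \<le> i \<and> i \<le> int r" "0 < w i"
      hence "i \<in> Dm r" by (auto simp: Dm_def)
      thus "int s + 1 \<le> w i \<and> w i \<le> int r" using rngD[of i] h by (auto simp: Dm_def sbk_def)
    qed
  qed (use that in auto)
  have b1: "w i = i" if "1 \<le> i" "i \<le> int s" for i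
  proof (rule block_id[of 1 "int s" w])
    show "\<forall>i. 1 \<le> i \<and> i < int s \<longrightarrow> pos (w i) (w (i + 1))"
      using ch rs by (auto simp: sbk_def)
    show "0 < w (int s)" using hs that by simp
    show "\<forall>i. 1 \<le> i \<and> i \<le> int s \<longrightarrow> 0 < w i \<longrightarrow> 1 \<le> w i \<and> w i \<le> int s"
    proof (intro allI impI)
      fix i assume h: "1 \<le> i \<and> i \<le> int s" "0 < w i"
      hence "i \<in> Dm r" using rs by (auto simp: Dm_def)
      thus "1 \<le> w i \<and> w i \<le> int s" using rngD[of i] h by (auto simp: Dm_def sbk_def)
    qed
  qed (use that in auto)
  have p: "w i = i" if "1 \<le> i" "i \<le> int r" for i
    using b1 b2 that by (cases "i \<le> int s") auto
  show "w = id"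
  proof
    fix x
    show "w x = id x"
    proof (cases "x \<in> Dm r")
      case False thus ?thesis using good_out[OF w] by simp
    next
      case True
      show ?thesis
      proof (cases "0 < x")
        case True thus ?thesis using p \<open>x \<in> Dm r\<close> by (auto simp: Dm_def)
      next
        case False
        hence "w (-x) = -x" using p \<open>x \<in> Dm r\<close> by (auto simp: Dm_def)
        thus ?thesis using good_odd[OF w, of x] by simp
      qed
    qed
  qed
qed

lemma short_invol: "1 \<le> a \<Longrightarrow> refl_short a (a+1) \<circ> refl_short a (a+1) = id"
  by (auto simp: refl_short_def)
lemma long_invol: "refl_long a \<circ> refl_long a = id"
  by (auto simp: refl_long_def)

definition needed :: "nat \<Rightarrow> nat \<Rightarrow> (int \<Rightarrow> int) set \<Rightarrow> bool" where
  "needed r s S \<longleftrightarrow> (\<forall>a. 1 \<le> a \<and> a+1 \<le> int r \<and> sbk s a (a+1) \<longrightarrow> refl_short a (a+1) \<in> S)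
      \<and> refl_long (int r) \<in> S \<and> (1 \<le> s \<longrightarrow> refl_long (int s) \<in> S)"

lemma exist_word:
  assumes rs: "1 \<le> r" "s < r" and S: "needed r s S"
  shows "good r s w \<Longrightarrow> \<exists>ws. set ws \<subseteq> S \<and> 2 * length ws = inv2 r s w \<and> word_prod ws = w"
proof (induction "inv2 r s w" arbitrary: w rule: less_induct)
  case less
  have ext: "\<exists>ws. set ws \<subseteq> S \<and> 2 * length ws = inv2 r s w \<and> word_prod ws = w"
    if t: "t \<in> S" "good r s t" "t \<circ> t = id" and dec: "inv2 r s (w \<circ> t) + 2 = inv2 r s w" for t
  proof -
    have "good r s (w \<circ> t)" using good_comp[OF less.prems t(2)] .
    from less.hyps[OF _ this] dec obtain ws where ws: "set ws \<subseteq> S" "2 * length ws = inv2 r s (w \<circ> t)"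
      "word_prod ws = w \<circ> t" by fastforce
    have "word_prod (ws @ [t]) = w" unfolding word_prod_snoc ws(3) by (simp add: comp_assoc t(3))
    thus ?thesis using ws t dec by (intro exI[of _ "ws @ [t]"]) auto
  qed
  show ?case
  proof (cases "(\<forall>a. 1 \<le> a \<and> a+1 \<le> int r \<and> sbk s a (a+1) \<longrightarrow> pos (w a) (w (a+1))) \<and> 0 < w (int r)
      \<and> (1 \<le> s \<longrightarrow> 0 < w (int s))")
    case True
    hence "w = id" using ident[OF less.prems rs] by blast
    thus ?thesis by (intro exI[of _ "[]"]) (simp add: word_prod_def inv2_id)
  next
    case False
    then consider (sh) a where "1 \<le> a" "a+1 \<le> int r" "sbk s a (a+1)" "\<not> pos (w a) (w (a+1))"
      | (lr) "\<not> 0 < w (int r)" | (ls) "1 \<le> s" "\<not> 0 < w (int s)" by blast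
    thus ?thesis
    proof cases
      case sh thus ?thesis using ext[of "refl_short a (a+1)"] S step_short(2)[OF less.prems sh(1-3)]
          good_short[OF sh(1-3)] short_invol[OF sh(1)] by (auto simp: needed_def)
    next
      case lr
      have be: "\<forall>y\<in>Dm r. sbk s (int r) y \<longrightarrow> \<bar>y\<bar> \<le> int r" by (auto simp: Dm_def)
      show ?thesis using ext[of "refl_long (int r)"] S step_long(2)[OF less.prems _ _ be] lr rs
          good_long[of "int r" r s] long_invol by (auto simp: needed_def)
    next
      case ls
      have be: "\<forall>y\<in>Dm r. sbk s (int s) y \<longrightarrow> \<bar>y\<bar> \<le> int s" by (auto simp: Dm_def sbk_def)
      show ?thesis using ext[of "refl_long (int s)"] S step_long(2)[OF less.prems _ _ be] ls rs
          good_long[of "int s" r s] long_invol by (auto simp: needed_def)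
    qed
  qed
qed

lemma len_formula:
  assumes rs: "1 \<le> r" "s < r" and S: "needed r s S" and ok: "\<forall>t\<in>S. rok r s t"
    and w: "w \<in> gen_group S"
  shows "2 * word_length S w = inv2 r s w" and "good r s w"
proof -
  obtain ws0 where ws0: "set ws0 \<subseteq> S" "word_prod ws0 = w" using w unfolding gen_group_def by auto
  show g: "good r s w" using word_lower[OF ok ws0(1)] ws0(2) by simp
  obtain ws where ws: "set ws \<subseteq> S" "2 * length ws = inv2 r s w" "word_prod ws = w"
    using exist_word[OF rs S g] by blast
  have ex: "\<exists>ws. set ws \<subseteq> S \<and> length ws = length ws \<and> word_prod ws = w" using ws by blast
  have le: "word_length S w \<le> length ws"
    unfolding word_length_def by (rule Least_le) (use ws in blast)
  have "\<exists>ws'. set ws' \<subseteq> S \<and> length ws' = word_length S w \<and> word_prod ws' = w"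
    unfolding word_length_def by (rule LeastI_ex) (use ws in blast)
  then obtain ws' where ws': "set ws' \<subseteq> S" "length ws' = word_length S w" "word_prod ws' = w" by blast
  have "inv2 r s w \<le> 2 * word_length S w" using word_lower[OF ok ws'(1)] ws' by simp
  thus "2 * word_length S w = inv2 r s w" using le ws(2) by linarith
qed



lemma sref_short_int: assumes "1 \<le> a" "a < int r" shows "refl_short a (a+1) = sref r (nat a)"
proof -
  have "nat a < r" "int (nat a) = a" using assms by auto
  thus ?thesis by (simp add: sref_def)
qed

lemma sbk0: "x \<noteq> 0 \<Longrightarrow> y \<noteq> 0 \<Longrightarrow> sbk 0 x y" by (auto simp: sbk_def)

lemma G_needed: assumes "1 \<le> r" shows "needed r 0 (simple_G r)"
  unfolding needed_def simple_G_def
proof (intro conjI allI impI)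
  fix a assume h: "1 \<le> a \<and> a + 1 \<le> int r \<and> sbk 0 a (a + 1)"
  hence "refl_short a (a+1) = sref r (nat a)" by (intro sref_short_int) auto
  moreover have "nat a \<in> {1..r}" using h by auto
  ultimately show "refl_short a (a + 1) \<in> sref r ` {1..r}" by blast
next
  have "refl_long (int r) = sref r r" by (simp add: sref_def)
  thus "refl_long (int r) \<in> sref r ` {1..r}" using assms by auto
qed auto

lemma sref_rok: assumes "i \<in> {1..r}" shows "rok r 0 (sref r i)"
proof (cases "i < r")
  case True
  thus ?thesis unfolding rok_def sref_def using assms by (auto intro!: exI[of _ "int i"] simp: sbk_def)
next
  case False
  hence "i = r" using assms by auto
  thus ?thesis unfolding rok_def sref_def using assms by (auto intro!: exI[of _ "int r"] simp: Dm_def)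
qed

lemma G_rok: "\<forall>t\<in>simple_G r. rok r 0 t"
  unfolding simple_G_def using sref_rok by blast

lemma P_sub_G: "simple_P r k \<subseteq> simple_G r" unfolding simple_P_def simple_G_def by auto

lemma gen_group_mono: "A \<subseteq> B \<Longrightarrow> gen_group A \<subseteq> gen_group B"
  unfolding gen_group_def by auto

lemma M_needed: assumes "1 \<le> s" "s < r" shows "needed r s (simple_M r s)"
  unfolding needed_def simple_M_def
proof (intro conjI allI impI)
  fix a assume h: "1 \<le> a \<and> a + 1 \<le> int r \<and> sbk s a (a + 1)"
  show "refl_short a (a + 1) \<in> (\<lambda>i. refl_short (int i) (int i + 1)) ` {1..<s} \<union> {refl_long (int s)} \<union> sref r ` {s + 1..r}"
  proof (cases "a < int s")
    case True
    hence "nat a \<in> {1..<s}" "refl_short a (a+1) = refl_short (int (nat a)) (int (nat a) + 1)" using h by auto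
    thus ?thesis by blast
  next
    case False
    hence "a > int s" using h by (auto simp: sbk_def)
    hence "refl_short a (a+1) = sref r (nat a)" "nat a \<in> {s+1..r}" using h by (auto intro!: sref_short_int)
    thus ?thesis by blast
  qed
next
  have "refl_long (int r) = sref r r" by (simp add: sref_def)
  thus "refl_long (int r) \<in> (\<lambda>i. refl_short (int i) (int i + 1)) ` {1..<s} \<union> {refl_long (int s)} \<union> sref r ` {s + 1..r}"
    using assms by auto
qed auto

lemma M_rok: assumes "1 \<le> s" "s < r" shows "\<forall>t\<in>simple_M r s. rok r s t"
  unfolding simple_M_def
proof (intro ballI)
  fix t assume "t \<in> (\<lambda>i. refl_short (int i) (int i + 1)) ` {1..<s} \<union> {refl_long (int s)} \<union> sref r ` {s + 1..r}"
  then consider (a) i where "i \<in> {1..<s}" "t = refl_short (int i) (int i + 1)"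
    | (b) "t = refl_long (int s)" | (c) i where "i \<in> {s+1..r}" "t = sref r i" by blast
  thus "rok r s t"
  proof cases
    case a thus ?thesis unfolding rok_def using assms by (auto intro!: exI[of _ "int i"] simp: sbk_def)
  next
    case b thus ?thesis unfolding rok_def using assms by (auto intro!: exI[of _ "int s"] simp: sbk_def)
  next
    case c
    show ?thesis
    proof (cases "i < r")
      case True
      hence "t = refl_short (int i) (int i + 1)" using c by (simp add: sref_def)
      thus ?thesis unfolding rok_def using assms c True by (auto intro!: exI[of _ "int i"] simp: sbk_def)
    next
      case False
      hence "i = r" using c by auto
      hence "t = refl_long (int r)" using c by (simp add: sref_def)
      thus ?thesis unfolding rok_def using assms by (auto intro!: exI[of _ "int r"] simp: Dm_def)
    qed
  qed
qed

lemma conj_long: "1 \<le> a \<Longrightarrow> refl_short a (a+1) \<circ> refl_long (a+1) \<circ> refl_short a (a+1) = refl_long a"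
  by (auto simp: refl_short_def refl_long_def)

lemma long_in_WP:
  assumes "int k < a" "a \<le> int r" "1 \<le> k"
  shows "refl_long a \<in> W_P r k"
proof -
  have key: "\<forall>a. int k < a \<longrightarrow> a = int r - int n \<longrightarrow> refl_long a \<in> W_P r k" for n
  proof (induction n)
    case 0
    show ?case
    proof (intro allI impI)
      fix a assume "int k < a" "a = int r - int 0"
      hence "refl_long a = sref r r" "r \<in> {1..r} - {k}" by (auto simp: sref_def)
      thus "refl_long a \<in> W_P r k" unfolding W_P_def simple_P_def by (metis gen_group_gen image_eqI)
    qed
  next
    case (Suc n)
    show ?case
    proof (intro allI impI)
      fix a assume h: "int k < a" "a = int r - int (Suc n)"
      have a1: "1 \<le> a" "a < int r" using h assms by auto
      have "k < nat a" using h(1) a1 by (simp add: zless_nat_eq_int_zless)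
      hence t: "refl_short a (a+1) = sref r (nat a)" "nat a \<in> {1..r} - {k}"
        using sref_short_int[OF a1] h a1 by auto
      hence tin: "refl_short a (a+1) \<in> W_P r k" unfolding W_P_def simple_P_def by (metis gen_group_gen image_eqI)
      have "refl_long (a+1) \<in> W_P r k" using Suc.IH h by auto
      hence "refl_short a (a+1) \<circ> refl_long (a+1) \<circ> refl_short a (a+1) \<in> W_P r k"
        using tin unfolding W_P_def by (intro gen_group_comp)
      thus "refl_long a \<in> W_P r k" using conj_long[of a] h assms by simp
    qed
  qed
  have "a = int r - int (nat (int r - a))" using assms by simp
  thus ?thesis using key[of "nat (int r - a)"] assms by blast
qed



lemma pos_pres:
  assumes odd: "\<forall>x. w (-x) = - w x" and inc: "\<forall>i j. lo \<le> i \<and> i < j \<and> j \<le> hi \<longrightarrow> w i < w j"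
    and ps: "\<forall>i. lo \<le> i \<and> i \<le> hi \<longrightarrow> 0 < w i" and lo: "1 \<le> lo"
    and p: "lo \<le> \<bar>p\<bar>" "\<bar>p\<bar> \<le> hi" and q: "lo \<le> \<bar>q\<bar>" "\<bar>q\<bar> \<le> hi"
  shows "pos (w p) (w q) = pos p q"
proof -
  have mono: "w i < w j \<longleftrightarrow> i < j" if "lo \<le> i" "i \<le> hi" "lo \<le> j" "j \<le> hi" for i j
    using inc that by (metis less_asym' linorder_neqE_linordered_idom)
  have wx: "w x = (if 0 < x then w \<bar>x\<bar> else - w \<bar>x\<bar>)" for x
  proof (cases "0 < x")
    case True thus ?thesis by simp
  next
    case False
    hence "\<bar>x\<bar> = -x" by simp
    moreover have "w x = - w (-x)" using odd[rule_format, of "-x"] by simp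
    ultimately show ?thesis using False by simp
  qed
  note wp = wx[of p] and wq = wx[of q]
  have m1: "w \<bar>p\<bar> < w \<bar>q\<bar> \<longleftrightarrow> \<bar>p\<bar> < \<bar>q\<bar>" "w \<bar>q\<bar> < w \<bar>p\<bar> \<longleftrightarrow> \<bar>q\<bar> < \<bar>p\<bar>"
    using mono p q by auto
  have pp: "0 < w \<bar>p\<bar>" "0 < w \<bar>q\<bar>" using ps p q by auto
  have nz: "p \<noteq> 0" "q \<noteq> 0" using p q lo by auto
  show ?thesis
    unfolding pos_def wp wq using m1 pp nz by (cases "0 < p"; cases "0 < q") auto
qed

definition goodP :: "nat \<Rightarrow> nat \<Rightarrow> (int \<Rightarrow> int) \<Rightarrow> bool" where
  "goodP r k u \<longleftrightarrow> good r 0 u \<and> (\<forall>x. 1 \<le> x \<and> x \<le> int k \<longrightarrow> 1 \<le> u x \<and> u x \<le> int k)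
     \<and> (\<forall>x. int k < \<bar>x\<bar> \<and> \<bar>x\<bar> \<le> int r \<longrightarrow> int k < \<bar>u x\<bar> \<and> \<bar>u x\<bar> \<le> int r)"

lemma goodP_comp_short:
  assumes "goodP r k u" "1 \<le> a" "a + 1 \<le> int r" "a \<noteq> int k"
  shows "goodP r k (u \<circ> refl_short a (a+1))"
proof -
  have g: "good r 0 (u \<circ> refl_short a (a+1))"
    using assms good_comp good_short[of a r 0] by (auto simp: goodP_def sbk_def)
  have r1: "1 \<le> refl_short a (a+1) x \<and> refl_short a (a+1) x \<le> int k" if "1 \<le> x" "x \<le> int k" for x
    using assms(2,4) that unfolding refl_short_def by auto
  have r2: "int k < \<bar>refl_short a (a+1) x\<bar> \<and> \<bar>refl_short a (a+1) x\<bar> \<le> int r" if "int k < \<bar>x\<bar>" "\<bar>x\<bar> \<le> int r" for x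
    using assms(2,3,4) that unfolding refl_short_def by auto
  show ?thesis using g r1 r2 assms(1) unfolding goodP_def by auto
qed

lemma goodP_comp_long:
  assumes "goodP r k u" "k < r"
  shows "goodP r k (u \<circ> refl_long (int r))"
proof -
  have g: "good r 0 (u \<circ> refl_long (int r))"
    using assms good_comp good_long[of "int r" r 0] by (auto simp: goodP_def)
  have r1: "refl_long (int r) x = x" if "1 \<le> x" "x \<le> int k" for x
    using assms(2) that unfolding refl_long_def by auto
  have r2: "\<bar>refl_long (int r) x\<bar> = \<bar>x\<bar>" for x
    unfolding refl_long_def by auto
  show ?thesis using g r1 r2 assms(1) unfolding goodP_def by auto
qed

lemma Pside:
  assumes wg: "good r 0 w"
    and KA: "\<forall>p q. 1 \<le> p \<and> p \<le> int k \<and> 1 \<le> q \<and> q \<le> int k \<longrightarrow> (pos (w p) (w q) \<longleftrightarrow> pos p q)"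
    and KC: "\<forall>p q. int k < \<bar>p\<bar> \<and> \<bar>p\<bar> \<le> int r \<and> int k < \<bar>q\<bar> \<and> \<bar>q\<bar> \<le> int r \<longrightarrow> (pos (w p) (w q) \<longleftrightarrow> pos p q)"
    and k: "1 \<le> k" "k < r"
  shows "set ws \<subseteq> simple_P r k \<Longrightarrow> goodP r k (word_prod ws) \<and>
           inv2 r 0 (w \<circ> word_prod ws) = inv2 r 0 w + inv2 r 0 (word_prod ws)"
proof (induction ws rule: rev_induct)
  case Nil
  have "goodP r k id" using good_id by (auto simp: goodP_def)
  thus ?case using inv2_id by (simp add: word_prod_def id_def)
next
  case (snoc t ws)
  define v where "v = word_prod ws"
  have sub: "set ws \<subseteq> simple_P r k" using snoc.prems by simp
  note ih0 = snoc.IH[OF sub]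
  have ih: "goodP r k v" "inv2 r 0 (w \<circ> v) = inv2 r 0 w + inv2 r 0 v" using ih0 unfolding v_def by blast+
  have vg: "good r 0 v" using ih(1) by (simp add: goodP_def)
  have wvg: "good r 0 (w \<circ> v)" using good_comp[OF wg vg] .
  have "t \<in> simple_P r k" using snoc.prems by simp
  then obtain i where i: "i \<in> {1..r}" "i \<noteq> k" "t = sref r i" unfolding simple_P_def by blast
  have wp: "word_prod (ws @ [t]) = v \<circ> t" unfolding v_def word_prod_snoc ..
  have assoc: "w \<circ> (v \<circ> t) = (w \<circ> v) \<circ> t" by (simp add: comp_assoc)
  show ?case
  proof (cases "i < r")
    case True
    define a where "a = int i"
    have a: "1 \<le> a" "a + 1 \<le> int r" "sbk 0 a (a+1)" "a \<noteq> int k" using i True by (auto simp: a_def sbk_def)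
    have tt: "t = refl_short a (a+1)" using i True by (simp add: sref_def a_def)
    have ceq: "pos (w (v a)) (w (v (a+1))) \<longleftrightarrow> pos (v a) (v (a+1))"
    proof (cases "a < int k")
      case True
      hence "1 \<le> v a \<and> v a \<le> int k" "1 \<le> v (a+1) \<and> v (a+1) \<le> int k"
        using ih(1) a unfolding goodP_def by auto
      thus ?thesis using KA by blast
    next
      case False
      hence "int k < \<bar>v a\<bar> \<and> \<bar>v a\<bar> \<le> int r" "int k < \<bar>v (a+1)\<bar> \<and> \<bar>v (a+1)\<bar> \<le> int r"
        using ih(1) a unfolding goodP_def by auto
      thus ?thesis using KC by blast
    qed

    have c': "pos ((w \<circ> v) a) ((w \<circ> v) (a+1)) \<longleftrightarrow> pos (v a) (v (a+1))" using ceq by simp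
    have g: "goodP r k (v \<circ> refl_short a (a+1))" by (rule goodP_comp_short[OF ih(1) a(1) a(2) a(4)])
    have W: "word_prod (ws @ [t]) = v \<circ> refl_short a (a+1)" using wp tt by simp
    have W2: "w \<circ> word_prod (ws @ [t]) = (w \<circ> v) \<circ> refl_short a (a+1)" by (simp only: W comp_assoc)
    show ?thesis
    proof (cases "pos (v a) (v (a+1))")
      case True
      have e1: "inv2 r 0 ((w \<circ> v) \<circ> refl_short a (a+1)) = inv2 r 0 (w \<circ> v) + 2"
        using step_short(1)[OF wvg a(1-3)] True c' by blast
      have e2: "inv2 r 0 (v \<circ> refl_short a (a+1)) = inv2 r 0 v + 2" using step_short(1)[OF vg a(1-3)] True by blast
      have A1: "goodP r k (word_prod (ws @ [t]))" unfolding W by (rule g)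
      have A2: "inv2 r 0 (w \<circ> word_prod (ws @ [t])) = inv2 r 0 w + inv2 r 0 (word_prod (ws @ [t]))"
        unfolding W comp_assoc[symmetric] using e1 e2 ih(2) by linarith
      show ?thesis using A1 A2 by blast
    next
      case False
      have e1: "inv2 r 0 ((w \<circ> v) \<circ> refl_short a (a+1)) + 2 = inv2 r 0 (w \<circ> v)"
        using step_short(2)[OF wvg a(1-3)] False c' by blast
      have e2: "inv2 r 0 (v \<circ> refl_short a (a+1)) + 2 = inv2 r 0 v" using step_short(2)[OF vg a(1-3)] False by blast
      have A1: "goodP r k (word_prod (ws @ [t]))" unfolding W by (rule g)
      have A2: "inv2 r 0 (w \<circ> word_prod (ws @ [t])) = inv2 r 0 w + inv2 r 0 (word_prod (ws @ [t]))"
        unfolding W comp_assoc[symmetric] using e1 e2 ih(2) by linarith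
      show ?thesis using A1 A2 by blast
    qed
  next
    case False
    hence ir: "i = r" using i by auto
    have tt: "t = refl_long (int r)" using i ir by (simp add: sref_def)
    have a: "1 \<le> int r" "int r \<le> int r" using k by auto
    have be: "\<forall>y\<in>Dm r. sbk 0 (int r) y \<longrightarrow> \<bar>y\<bar> \<le> int r" by (auto simp: Dm_def)
    define p where "p = v (int r)"
    have pr: "int k < \<bar>p\<bar> \<and> \<bar>p\<bar> \<le> int r" using ih(1) k unfolding goodP_def p_def by auto
    have "pos (w p) (w (-p)) \<longleftrightarrow> pos p (-p)" using KC pr by auto
    moreover have "w (-p) = - w p" using good_odd[OF wg] .
    ultimately have c': "0 < (w \<circ> v) (int r) \<longleftrightarrow> 0 < v (int r)" unfolding p_def by (simp add: pos_negself)
    have g: "goodP r k (v \<circ> refl_long (int r))" by (rule goodP_comp_long[OF ih(1) k(2)])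
    have W: "word_prod (ws @ [t]) = v \<circ> refl_long (int r)" using wp tt by simp
    have W2: "w \<circ> word_prod (ws @ [t]) = (w \<circ> v) \<circ> refl_long (int r)" by (simp only: W comp_assoc)
    show ?thesis
    proof (cases "0 < v (int r)")
      case True
      have e1: "inv2 r 0 ((w \<circ> v) \<circ> refl_long (int r)) = inv2 r 0 (w \<circ> v) + 2"
        using step_long(1)[OF wvg a be] True c' by blast
      have e2: "inv2 r 0 (v \<circ> refl_long (int r)) = inv2 r 0 v + 2" using step_long(1)[OF vg a be] True by blast
      have A1: "goodP r k (word_prod (ws @ [t]))" unfolding W by (rule g)
      have A2: "inv2 r 0 (w \<circ> word_prod (ws @ [t])) = inv2 r 0 w + inv2 r 0 (word_prod (ws @ [t]))"
        unfolding W comp_assoc[symmetric] using e1 e2 ih(2) by linarith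
      show ?thesis using A1 A2 by blast
    next
      case False
      have e1: "inv2 r 0 ((w \<circ> v) \<circ> refl_long (int r)) + 2 = inv2 r 0 (w \<circ> v)"
        using step_long(2)[OF wvg a be] False c' by blast
      have e2: "inv2 r 0 (v \<circ> refl_long (int r)) + 2 = inv2 r 0 v" using step_long(2)[OF vg a be] False by blast
      have A1: "goodP r k (word_prod (ws @ [t]))" unfolding W by (rule g)
      have A2: "inv2 r 0 (w \<circ> word_prod (ws @ [t])) = inv2 r 0 w + inv2 r 0 (word_prod (ws @ [t]))"
        unfolding W comp_assoc[symmetric] using e1 e2 ih(2) by linarith
      show ?thesis using A1 A2 by blast
    qed
  qed
qed



theorem mainTheorem5:
  fixes r s k :: nat
  assumes "1 \<le> k" and "k \<le> s" and "s < r"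
  shows "WMQ_reps r s k \<subseteq> WP_reps r k"
proof
  fix w assume wm: "w \<in> WMQ_reps r s k"
  hence wM: "w \<in> W_M r s"
    and minM: "\<forall>u\<in>W_Q r s k. word_length (simple_M r s) w \<le> word_length (simple_M r s) (w \<circ> u)"
    unfolding WMQ_reps_def min_reps_def by auto
  have r1: "1 \<le> r" "1 \<le> s" using assms by auto
  note MN = M_needed[OF r1(2) assms(3)] and MR = M_rok[OF r1(2) assms(3)]
  have lenM: "2 * word_length (simple_M r s) u = inv2 r s u" if "u \<in> W_M r s" for u
    using len_formula(1)[OF r1(1) assms(3) MN MR] that unfolding W_M_def by blast
  have wg: "good r s w" using len_formula(2)[OF r1(1) assms(3) MN MR] wM unfolding W_M_def by blast
  have cond: "inv2 r s w \<le> inv2 r s (w \<circ> t)" if "t \<in> simple_M r s" "t \<in> W_P r k" for t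
  proof -
    have tM: "t \<in> W_M r s" using that(1) unfolding W_M_def by (rule gen_group_gen)
    hence "t \<in> W_Q r s k" using that unfolding W_Q_def by blast
    hence "word_length (simple_M r s) w \<le> word_length (simple_M r s) (w \<circ> t)" using minM by blast
    moreover have "w \<circ> t \<in> W_M r s" using wM tM unfolding W_M_def by (rule gen_group_comp)
    ultimately show ?thesis using lenM[OF wM] lenM[of "w \<circ> t"] by linarith
  qed
  have inWP: "sref r i \<in> W_P r k" if "i \<in> {1..r}" "i \<noteq> k" for i
    unfolding W_P_def simple_P_def using that by (intro gen_group_gen) blast
  have c1: "pos (w a) (w (a+1))" if a: "1 \<le> a" "a + 1 \<le> int r" "a \<noteq> int k" "a \<noteq> int s" for a
  proof (rule ccontr)
    assume np: "\<not> pos (w a) (w (a+1))"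
    have sb: "sbk s a (a+1)" using a by (auto simp: sbk_def)
    have tM: "refl_short a (a+1) \<in> simple_M r s" using MN a sb unfolding needed_def by blast
    have "k \<noteq> nat a" "nat a \<in> {1..r}" using a by auto
    hence "sref r (nat a) \<in> W_P r k" using inWP by auto
    moreover have "refl_short a (a+1) = sref r (nat a)" using sref_short_int[of a r] a by auto
    ultimately have "refl_short a (a+1) \<in> W_P r k" by simp
    hence "inv2 r s w \<le> inv2 r s (w \<circ> refl_short a (a+1))" using cond tM by blast
    thus False using step_short(2)[OF wg a(1,2) sb np] by linarith
  qed
  have c2: "0 < w (int r)"
  proof (rule ccontr)
    assume np: "\<not> 0 < w (int r)"
    have be: "\<forall>y\<in>Dm r. sbk s (int r) y \<longrightarrow> \<bar>y\<bar> \<le> int r" by (auto simp: Dm_def)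
    have tM: "refl_long (int r) \<in> simple_M r s" using MN unfolding needed_def by blast
    have "refl_long (int r) = sref r r" by (simp add: sref_def)
    hence "refl_long (int r) \<in> W_P r k" using inWP[of r] assms by auto
    hence "inv2 r s w \<le> inv2 r s (w \<circ> refl_long (int r))" using cond tM by blast
    thus False using step_long(2)[OF wg _ _ be np] r1 by linarith
  qed
  have c3: "0 < w (int s)" if ks: "k < s"
  proof (rule ccontr)
    assume np: "\<not> 0 < w (int s)"
    have be: "\<forall>y\<in>Dm r. sbk s (int s) y \<longrightarrow> \<bar>y\<bar> \<le> int s" by (auto simp: Dm_def sbk_def)
    have tM: "refl_long (int s) \<in> simple_M r s" using MN r1 unfolding needed_def by blast
    have "refl_long (int s) \<in> W_P r k" using long_in_WP[of k "int s" r] ks assms by auto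
    hence "inv2 r s w \<le> inv2 r s (w \<circ> refl_long (int s))" using cond tM by blast
    thus False using step_long(2)[OF wg _ _ be np] r1 assms by linarith
  qed
  have rngD: "w i \<in> Dm r" "sbk s (w i) i" if "i \<in> Dm r" for i using good_D[OF wg that] good_sb[OF wg that] by auto
  have P3: "w i = i" if "int s + 1 \<le> i" "i \<le> int r" for i
  proof (rule block_id[of "int s + 1" "int r" w])
    show "\<forall>i. int s + 1 \<le> i \<and> i < int r \<longrightarrow> pos (w i) (w (i + 1))"
      using c1 assms by auto
    show "0 < w (int r)" by (rule c2)
    show "\<forall>i. int s + 1 \<le> i \<and> i \<le> int r \<longrightarrow> 0 < w i \<longrightarrow> int s + 1 \<le> w i \<and> w i \<le> int r"
    proof (intro allI impI)
      fix i assume h: "int s + 1 \<le> i \<and> i \<le> int r" "0 < w i"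
      hence "i \<in> Dm r" by (auto simp: Dm_def)
      thus "int s + 1 \<le> w i \<and> w i \<le> int r" using rngD[of i] h by (auto simp: Dm_def sbk_def)
    qed
  qed (use that in auto)
  have ch2: "\<forall>i. int k + 1 \<le> i \<and> i < int s \<longrightarrow> pos (w i) (w (i + 1))" using c1 assms by auto
  have P1: "0 < w i \<and> w i \<le> int s" if "int k + 1 \<le> i" "i \<le> int s" for i
  proof -
    have ks: "k < s" using that by linarith
    have "0 < w i"
    proof (cases "i = int s")
      case True thus ?thesis using c3[OF ks] by simp
    next
      case False thus ?thesis using chain_pos[OF ch2, of i "int s"] that c3[OF ks] pos_posR by fastforce
    qed
    moreover have "i \<in> Dm r" using that assms by (auto simp: Dm_def)
    ultimately show ?thesis using rngD[of i] that by (auto simp: Dm_def sbk_def)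
  qed
  have P2: "w i < w j" if "int k + 1 \<le> i" "i < j" "j \<le> int s" for i j
    using chain_pos[OF ch2 that] P1[of j] that pos_posR by fastforce
  have inc: "\<forall>i j. int k + 1 \<le> i \<and> i < j \<and> j \<le> int r \<longrightarrow> w i < w j"
  proof (intro allI impI)
    fix i j assume h: "int k + 1 \<le> i \<and> i < j \<and> j \<le> int r"
    show "w i < w j"
    proof (cases "j \<le> int s")
      case True thus ?thesis using P2 h by auto
    next
      case False
      hence wj: "w j = j" using P3 h by auto
      show ?thesis
      proof (cases "i \<le> int s")
        case True thus ?thesis using P1[of i] h wj False by auto
      next
        case False thus ?thesis using P3[of i] h wj by auto
      qed
    qed
  qed
  have psv: "\<forall>i. int k + 1 \<le> i \<and> i \<le> int r \<longrightarrow> 0 < w i"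
    using P1 P3 by (metis add.commute linorder_not_le zless_imp_add1_zle order_le_less_trans zero_less_one
        of_nat_0_le_iff add_increasing order_less_le_trans)
  have KC: "\<forall>p q. int k < \<bar>p\<bar> \<and> \<bar>p\<bar> \<le> int r \<and> int k < \<bar>q\<bar> \<and> \<bar>q\<bar> \<le> int r \<longrightarrow> (pos (w p) (w q) \<longleftrightarrow> pos p q)"
  proof (intro allI impI)
    fix p q assume h: "int k < \<bar>p\<bar> \<and> \<bar>p\<bar> \<le> int r \<and> int k < \<bar>q\<bar> \<and> \<bar>q\<bar> \<le> int r"
    show "pos (w p) (w q) \<longleftrightarrow> pos p q"
      by (rule pos_pres[of w "int k + 1" "int r"]) (use good_odd[OF wg] inc psv h assms in auto)
  qed
  have ch1: "\<forall>i. 1 \<le> i \<and> i < int k \<longrightarrow> pos (w i) (w (i + 1))" using c1 assms by auto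
  have KA: "\<forall>p q. 1 \<le> p \<and> p \<le> int k \<and> 1 \<le> q \<and> q \<le> int k \<longrightarrow> (pos (w p) (w q) \<longleftrightarrow> pos p q)"
  proof (intro allI impI)
    fix p q assume h: "1 \<le> p \<and> p \<le> int k \<and> 1 \<le> q \<and> q \<le> int k"
    consider "p < q" | "q < p" | "p = q" by linarith
    thus "pos (w p) (w q) \<longleftrightarrow> pos p q"
    proof cases
      case 1
      have "pos (w p) (w q)" using chain_pos[OF ch1, of p q] h 1 by auto
      moreover have "pos p q" using 1 h by (auto simp: pos_def)
      ultimately show ?thesis by simp
    next
      case 2
      have "pos (w q) (w p)" using chain_pos[OF ch1, of q p] h 2 by auto
      hence "\<not> pos (w p) (w q)" using pos_asym by blast
      moreover have "\<not> pos p q" using 2 h by (auto simp: pos_def)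
      ultimately show ?thesis by simp
    next
      case 3 thus ?thesis using pos_irrefl by simp
    qed
  qed
  have wg0: "good r 0 w"
    using wg good_D[OF wg] unfolding good_def by (auto simp: sbk_def Dm_def)
  have GN: "needed r 0 (simple_G r)" using G_needed r1 by blast
  have r0: "0 < r" using r1 by simp
  have wG: "w \<in> W_G r"
    using exist_word[OF r1(1) r0 GN wg0] unfolding W_G_def gen_group_def by blast
  have lenG: "2 * word_length (simple_G r) u = inv2 r 0 u" if "u \<in> W_G r" for u
    using len_formula(1)[OF r1(1) r0 GN G_rok] that unfolding W_G_def by blast
  show "w \<in> WP_reps r k"
    unfolding WP_reps_def min_reps_def
  proof (intro CollectI conjI ballI)
    show "w \<in> W_G r" by (rule wG)
    fix u assume uP: "u \<in> W_P r k"
    then obtain ws where ws: "set ws \<subseteq> simple_P r k" "word_prod ws = u" unfolding W_P_def gen_group_def by auto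
    have eq: "inv2 r 0 (w \<circ> u) = inv2 r 0 w + inv2 r 0 u"
      using Pside[OF wg0 KA KC assms(1)] ws assms by auto
    have uG: "u \<in> W_G r" using uP gen_group_mono[OF P_sub_G] unfolding W_P_def W_G_def by blast
    have "w \<circ> u \<in> W_G r" using wG uG unfolding W_G_def by (rule gen_group_comp)
    thus "word_length (simple_G r) w \<le> word_length (simple_G r) (w \<circ> u)"
      using lenG[OF wG] lenG[of "w \<circ> u"] eq by linarith
  qed
qed


end
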